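(* Let $G$ be a simple graph of order $n$ and let $m\ge 1$. Let $M$ be a maximum matching of $G$, $\alpha'(G)=|M|$, and let $l=n-2\alpha'(G)$ be the number of vertices of $G$ not covered by $M$. Then $s(G\circ \overline{K_m})=\alpha'(G)+l$. In particular, if $G$ has a perfect matching, then $s(G\circ\overline{K_m})=n/2$.
   Context: A matching in a graph is a set of edges no two of which share a vertex; it is maximal if it is not properly contained in another matching, and maximum if it has the largest possible size. $\alpha'(G)$ is the size of a maximum matching of $G$. The saturation number $s(G)$ is the minimum cardinality of a maximal matching of $G$. $\overline{K_m}$ is the edgeless graph on $m$ vertices. The corona $G_1\circ G_2$ of graphs $G_1$ and $G_2$ is obtained by taking one copy of $G_1$ and $|V(G_1)|$ disjoint copies of $G_2$, and joining the $i$-th vertex of $G_1$ by an edge to every vertex of the $i$-th copy of $G_2$. *)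

theory Defs
  imports Complex_Main
begin

definition simple_graph :: "'a set \<Rightarrow> 'a set set \<Rightarrow> bool" where
  "simple_graph V E \<longleftrightarrow> finite V \<and>
     (\<forall>e\<in>E. \<exists>u v. u \<noteq> v \<and> u \<in> V \<and> v \<in> V \<and> e = {u, v})"

definition matching :: "'a set set \<Rightarrow> 'a set set \<Rightarrow> bool" where
  "matching E M \<longleftrightarrow> M \<subseteq> E \<and> (\<forall>e1\<in>M. \<forall>e2\<in>M. e1 \<noteq> e2 \<longrightarrow> e1 \<inter> e2 = {})"

definition maximal_matching :: "'a set set \<Rightarrow> 'a set set \<Rightarrow> bool" where
  "maximal_matching E M \<longleftrightarrow> matching E M \<and> (\<forall>M'. matching E M' \<longrightarrow> M \<subseteq> M' \<longrightarrow> M' = M)"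

definition maximum_matching :: "'a set set \<Rightarrow> 'a set set \<Rightarrow> bool" where
  "maximum_matching E M \<longleftrightarrow> matching E M \<and> (\<forall>M'. matching E M' \<longrightarrow> card M' \<le> card M)"

definition perfect_matching :: "'a set \<Rightarrow> 'a set set \<Rightarrow> 'a set set \<Rightarrow> bool" where
  "perfect_matching V E M \<longleftrightarrow> matching E M \<and> \<Union>M = V"

definition matching_number :: "'a set set \<Rightarrow> nat" where
  "matching_number E = Max (card ` {M. matching E M})"

definition saturation_number :: "'a set set \<Rightarrow> nat" where
  "saturation_number E = Min (card ` {M. maximal_matching E M})"

text \<open>Corona G1 o G2: vertices Inl v (v in V1) and Inr (v, w) (the copy of w in
  the copy of G2 attached to v).\<close>
definition corona_verts :: "'a set \<Rightarrow> 'b set \<Rightarrow> ('a + 'a \<times> 'b) set" where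
  "corona_verts V1 V2 = Inl ` V1 \<union> {Inr (v, w) | v w. v \<in> V1 \<and> w \<in> V2}"

definition corona_edges ::
  "'a set \<Rightarrow> 'a set set \<Rightarrow> 'b set \<Rightarrow> 'b set set \<Rightarrow> ('a + 'a \<times> 'b) set set" where
  "corona_edges V1 E1 V2 E2 =
     (\<lambda>e. Inl ` e) ` E1
   \<union> {(\<lambda>w. Inr (v, w)) ` e | v e. v \<in> V1 \<and> e \<in> E2}
   \<union> {{Inl v, Inr (v, w)} | v w. v \<in> V1 \<and> w \<in> V2}"

definition empty_verts :: "nat \<Rightarrow> nat set" where
  "empty_verts m = {..<m}"

definition empty_edges :: "nat \<Rightarrow> nat set set" where
  "empty_edges m = {}"

end

theory Submission
  imports Defs
begin

lemma sg_edge: "simple_graph V E \<Longrightarrow> e \<in> E \<Longrightarrow> card e = 2 \<and> e \<subseteq> V \<and> finite e"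
  unfolding simple_graph_def by fastforce

lemma sg_finE: "simple_graph V E \<Longrightarrow> finite E"
proof -
  assume a: "simple_graph V E"
  have "E \<subseteq> Pow V" using sg_edge[OF a] by blast
  moreover have "finite V" using a by (simp add: simple_graph_def)
  ultimately show ?thesis by (meson finite_Pow_iff finite_subset)
qed

lemma matching_card:
  assumes sg: "simple_graph V E" and mt: "matching E M"
  shows "finite M" "card (\<Union>M) = 2 * card M" "\<Union>M \<subseteq> V"
proof -
  have sub: "M \<subseteq> E" using mt by (simp add: matching_def)
  show fM: "finite M" using sg_finE[OF sg] sub finite_subset by blast
  have "card (\<Union>M) = sum card M"
    apply (rule card_Union_disjoint)
    using mt sub sg_edge[OF sg] unfolding matching_def pairwise_def disjnt_def by auto
  also have "\<dots> = sum (\<lambda>_. 2) M" using sub sg_edge[OF sg] by (intro sum.cong) auto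
  finally show "card (\<Union>M) = 2 * card M" by simp
  show "\<Union>M \<subseteq> V" using sub sg_edge[OF sg] by blast
qed

lemma matching_le:
  assumes sg: "simple_graph V E" and mt: "matching E M"
  shows "2 * card M \<le> card V"
proof -
  have "finite V" using sg by (simp add: simple_graph_def)
  thus ?thesis using matching_card[OF sg mt] by (metis card_mono)
qed

lemma CE_eq:
  "corona_edges V E (empty_verts m) (empty_edges m) =
     (\<lambda>e. Inl ` e) ` E \<union> {{Inl v, Inr (v, w)} | v w. v \<in> V \<and> w < m}"
  unfolding corona_edges_def empty_verts_def empty_edges_def by auto

lemma CE_fin:
  assumes sg: "simple_graph V E"
  shows "finite (corona_edges V E (empty_verts m) (empty_edges m))"
proof -
  have "{{Inl v, Inr (v, w)} | v w. v \<in> V \<and> w < m} = (\<lambda>(v,w). {Inl v, Inr (v, w)}) ` (V \<times> {..<m})"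
    by auto
  moreover have "finite V" using sg by (simp add: simple_graph_def)
  ultimately show ?thesis unfolding CE_eq using sg_finE[OF sg] by simp
qed


lemma covered:
  assumes "m \<ge> 1" and mx: "maximal_matching (corona_edges V E (empty_verts m) (empty_edges m)) N"
    and v: "v \<in> V"
  shows "Inl v \<in> \<Union>N"
proof (rule ccontr)
  assume nc: "Inl v \<notin> \<Union>N"
  let ?CE = "corona_edges V E (empty_verts m) (empty_edges m)"
  let ?p = "{Inl v, Inr (v, 0)} :: ('a + 'a \<times> nat) set"
  have "?p \<in> {{Inl v, Inr (v, w)} | v w. v \<in> V \<and> w < m}"
    using assms(1) v by (intro CollectI exI[of _ v] exI[of _ 0]) simp
  hence pin: "?p \<in> ?CE" unfolding CE_eq by blast
  have NCE: "N \<subseteq> ?CE" and dj: "\<forall>e1\<in>N. \<forall>e2\<in>N. e1 \<noteq> e2 \<longrightarrow> e1 \<inter> e2 = {}"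
    using mx by (auto simp: maximal_matching_def matching_def)
  have "\<forall>e\<in>N. e \<inter> ?p = {}"
  proof
    fix e assume e: "e \<in> N"
    have "Inl v \<notin> e" using nc e by blast
    moreover have "Inr (v, 0) \<notin> e"
    proof
      assume r: "Inr (v, 0) \<in> e"
      have "e \<in> ?CE" using NCE e by blast
      then show False unfolding CE_eq using r \<open>Inl v \<notin> e\<close> by auto
    qed
    ultimately show "e \<inter> ?p = {}" by blast
  qed
  hence dj2: "\<forall>e1\<in>insert ?p N. \<forall>e2\<in>insert ?p N. e1 \<noteq> e2 \<longrightarrow> e1 \<inter> e2 = {}"
    using dj by (metis Int_commute insert_iff)
  have "insert ?p N \<subseteq> ?CE" using pin NCE by simp
  hence "matching ?CE (insert ?p N)" using dj2 unfolding matching_def by (intro conjI)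
  moreover have "N \<subseteq> insert ?p N" by blast
  ultimately have "insert ?p N = N" using mx unfolding maximal_matching_def by (elim conjE allE impE)
  hence "?p \<in> N" by blast
  thus False using nc by blast
qed

lemma lower:
  assumes sg: "simple_graph V E" and "m \<ge> 1"
    and mx: "maximal_matching (corona_edges V E (empty_verts m) (empty_edges m)) N"
    and mm: "maximum_matching E M"
  shows "card V - card M \<le> card N"
proof -
  let ?CE = "corona_edges V E (empty_verts m) (empty_edges m)"
  have NCE: "N \<subseteq> ?CE" and dj: "\<forall>e1\<in>N. \<forall>e2\<in>N. e1 \<noteq> e2 \<longrightarrow> e1 \<inter> e2 = {}"
    using mx by (auto simp: maximal_matching_def matching_def)
  have fN: "finite N" using CE_fin[OF sg] NCE finite_subset by blast
  have fV: "finite V" using sg by (simp add: simple_graph_def)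
  define MG where "MG = {a\<in>E. Inl ` a \<in> N}"
  define N1 :: "('a + 'a \<times> nat) set set" where "N1 = (\<lambda>a. Inl ` a) ` MG"
  have injI: "inj_on (\<lambda>a. Inl ` a :: ('a + 'a \<times> nat) set) MG"
    by (rule inj_onI) (metis inj_Inl inj_image_eq_iff)
  have mG: "matching E MG"
    unfolding matching_def
  proof (intro conjI ballI impI)
    show "MG \<subseteq> E" unfolding MG_def by blast
    fix a1 a2 assume a: "a1 \<in> MG" "a2 \<in> MG" "a1 \<noteq> a2"
    hence "(Inl ` a1 :: ('a + 'a \<times> nat) set) \<noteq> Inl ` a2" using injI by (meson inj_on_eq_iff)
    hence "(Inl ` a1 :: ('a + 'a \<times> nat) set) \<inter> Inl ` a2 = {}" using dj a unfolding MG_def by blast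
    thus "a1 \<inter> a2 = {}" by blast
  qed
  have cN1: "card N1 \<le> card M"
  proof -
    have "card N1 = card MG" unfolding N1_def using injI by (rule card_image)
    thus ?thesis using mm mG unfolding maximum_matching_def by simp
  qed
  have N1N: "N1 \<subseteq> N" unfolding N1_def MG_def by blast
  have rest: "\<forall>e\<in>N - N1. \<exists>v w. v \<in> V \<and> e = {Inl v, Inr (v, w)}"
  proof
    fix e assume e: "e \<in> N - N1"
    hence "e \<in> ?CE" using NCE by blast
    moreover have "\<not> (\<exists>a\<in>E. e = Inl ` a)" using e unfolding N1_def MG_def by blast
    ultimately show "\<exists>v w. v \<in> V \<and> e = {Inl v, Inr (v, w)}" unfolding CE_eq by blast
  qed
  have "card (Inl ` V :: ('a + 'a \<times> nat) set) = card (\<Union>e\<in>N. e \<inter> Inl ` V)"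
  proof -
    have "Inl ` V = (\<Union>e\<in>N. e \<inter> Inl ` V)" using covered[OF assms(2) mx] by blast
    thus ?thesis by simp
  qed
  also have "\<dots> = (\<Sum>e\<in>N. card (e \<inter> Inl ` V))"
    apply (rule card_UN_disjoint[OF fN])
    using dj fV by auto
  also have "\<dots> = (\<Sum>e\<in>N1. card (e \<inter> Inl ` V)) + (\<Sum>e\<in>N - N1. card (e \<inter> Inl ` V))"
    using sum.subset_diff[OF N1N fN, of "\<lambda>e. card (e \<inter> Inl ` V)"] by (simp add: add.commute)
  also have "(\<Sum>e\<in>N1. card (e \<inter> Inl ` V)) = (\<Sum>e\<in>N1. 2)"
  proof (rule sum.cong)
    fix e assume "e \<in> N1"
    then obtain a where a: "a \<in> E" "e = Inl ` a" unfolding N1_def MG_def by blast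
    have "card a = 2" "a \<subseteq> V" using sg_edge[OF sg a(1)] by auto
    hence "e \<inter> Inl ` V = Inl ` a" using a by blast
    thus "card (e \<inter> Inl ` V) = 2" using \<open>card a = 2\<close> by (simp add: card_image)
  qed simp
  also have "(\<Sum>e\<in>N - N1. card (e \<inter> Inl ` V)) = (\<Sum>e\<in>N - N1. 1)"
  proof (rule sum.cong)
    fix e assume "e \<in> N - N1"
    then obtain v w where "v \<in> V" "e = {Inl v, Inr (v, w)}" using rest by blast
    hence "e \<inter> Inl ` V = {Inl v}" by auto
    thus "card (e \<inter> Inl ` V) = 1" by simp
  qed simp
  finally have "card (Inl ` V :: ('a + 'a \<times> nat) set) = 2 * card N1 + card (N - N1)" by simp
  moreover have "card (Inl ` V :: ('a + 'a \<times> nat) set) = card V" by (simp add: card_image)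
  moreover have "card N = card N1 + card (N - N1)"
    using card_Diff_subset[OF finite_subset[OF N1N fN] N1N] card_mono[OF fN N1N] by linarith
  ultimately show ?thesis using cN1 by linarith
qed


lemma upper:
  assumes sg: "simple_graph V E" and m1: "m \<ge> 1" and mm: "maximum_matching E M"
  shows "\<exists>N0. maximal_matching (corona_edges V E (empty_verts m) (empty_edges m)) N0
             \<and> card N0 = card M + (card V - 2 * card M)"
proof -
  let ?CE = "corona_edges V E (empty_verts m) (empty_edges m)"
  have mt: "matching E M" using mm by (simp add: maximum_matching_def)
  have ME: "M \<subseteq> E" and djM: "\<forall>e1\<in>M. \<forall>e2\<in>M. e1 \<noteq> e2 \<longrightarrow> e1 \<inter> e2 = {}"
    using mt by (auto simp: matching_def)
  have fV: "finite V" using sg by (simp add: simple_graph_def)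
  define U where "U = V - \<Union>M"
  define A :: "('a + 'a \<times> nat) set set" where "A = (\<lambda>e. Inl ` e) ` M"
  define B :: "('a + 'a \<times> nat) set set" where "B = (\<lambda>v. {Inl v, Inr (v, 0)}) ` U"
  define N0 where "N0 = A \<union> B"
  have fM: "finite M" using matching_card[OF sg mt] by simp
  have cA: "card A = card M" unfolding A_def
    by (rule card_image, rule inj_onI) (metis inj_Inl inj_image_eq_iff)
  have cB: "card B = card U" unfolding B_def
    by (rule card_image, rule inj_onI) auto
  have cU: "card U = card V - 2 * card M"
  proof -
    have "finite (\<Union>M)" using matching_card(3)[OF sg mt] fV finite_subset by blast
    thus ?thesis unfolding U_def using card_Diff_subset[OF _ matching_card(3)[OF sg mt]] matching_card(2)[OF sg mt] by simp
  qed
  have dAB: "A \<inter> B = {}" unfolding A_def B_def by auto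
  have cN0: "card N0 = card M + (card V - 2 * card M)"
  proof -
    have "finite A" unfolding A_def using fM by simp
    moreover have "finite B" unfolding B_def U_def using fV by simp
    ultimately have "card N0 = card A + card B" unfolding N0_def using dAB by (simp add: card_Un_disjoint)
    thus ?thesis using cA cB cU by simp
  qed
  have sub: "N0 \<subseteq> ?CE"
  proof
    fix e assume "e \<in> N0"
    then consider "e \<in> A" | "e \<in> B" unfolding N0_def by blast
    then show "e \<in> ?CE"
    proof cases
      case 1 thus ?thesis unfolding CE_eq A_def using ME by blast
    next
      case 2
      then obtain v where v: "v \<in> V" "e = {Inl v, Inr (v, 0)}" unfolding B_def U_def by blast
      have "e \<in> {{Inl v, Inr (v, w)} | v w. v \<in> V \<and> w < m}"
        using m1 v by (intro CollectI exI[of _ v] exI[of _ 0]) simp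
      thus ?thesis unfolding CE_eq by blast
    qed
  qed
  have dj: "\<forall>e1\<in>N0. \<forall>e2\<in>N0. e1 \<noteq> e2 \<longrightarrow> e1 \<inter> e2 = {}"
  proof (intro ballI impI)
    fix e1 e2 assume e: "e1 \<in> N0" "e2 \<in> N0" "e1 \<noteq> e2"
    show "e1 \<inter> e2 = {}"
    proof (cases "e1 \<in> A")
      case True
      then obtain a where a: "a \<in> M" "e1 = Inl ` a" unfolding A_def by blast
      show ?thesis
      proof (cases "e2 \<in> A")
        case True
        then obtain b where b: "b \<in> M" "e2 = Inl ` b" unfolding A_def by blast
        have "a \<noteq> b" using a b e by blast
        hence "a \<inter> b = {}" using djM a b by blast
        thus ?thesis using a b by blast
      next
        case False
        hence "e2 \<in> B" using e N0_def by blast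
        then obtain v where "v \<in> U" "e2 = {Inl v, Inr (v, 0)}" unfolding B_def by blast
        thus ?thesis using a unfolding U_def by blast
      qed
    next
      case False
      hence "e1 \<in> B" using e N0_def by blast
      then obtain v where v: "v \<in> U" "e1 = {Inl v, Inr (v, 0)}" unfolding B_def by blast
      show ?thesis
      proof (cases "e2 \<in> A")
        case True
        then obtain b where b: "b \<in> M" "e2 = Inl ` b" unfolding A_def by blast
        thus ?thesis using v unfolding U_def by blast
      next
        case False
        hence "e2 \<in> B" using e N0_def by blast
        then obtain u where "u \<in> U" "e2 = {Inl u, Inr (u, 0)}" unfolding B_def by blast
        thus ?thesis using v e by auto
      qed
    qed
  qed
  have mN0: "matching ?CE N0" using sub dj unfolding matching_def by blast
  have "maximal_matching ?CE N0"
    unfolding maximal_matching_def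
  proof (intro conjI allI impI mN0)
    fix N' assume m': "matching ?CE N'" and s: "N0 \<subseteq> N'"
    show "N' = N0"
    proof
      show "N' \<subseteq> N0"
      proof
        fix e assume eN: "e \<in> N'"
        hence "e \<in> ?CE" using m' by (auto simp: matching_def)
        have "\<exists>v. v \<in> V \<and> Inl v \<in> e"
        proof -
          have "e \<in> (\<lambda>e. Inl ` e) ` E \<or> e \<in> {{Inl v, Inr (v, w)} | v w. v \<in> V \<and> w < m}"
            using \<open>e \<in> ?CE\<close> unfolding CE_eq by blast
          thus ?thesis
          proof
            assume "e \<in> (\<lambda>e. Inl ` e) ` E"
            then obtain x where x: "x \<in> E" "e = Inl ` x" by blast
            obtain u w where "u \<in> V" "x = {u, w}" using sg x(1) unfolding simple_graph_def by blast
            thus ?thesis using x by blast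
          next
            assume "e \<in> {{Inl v, Inr (v, w)} | v w. v \<in> V \<and> w < m}"
            thus ?thesis by blast
          qed
        qed
        then obtain v where v: "v \<in> V" "Inl v \<in> e" by blast
        obtain f where f: "f \<in> N0" "Inl v \<in> f"
        proof (cases "v \<in> \<Union>M")
          case True
          then obtain a where "a \<in> M" "v \<in> a" by blast
          thus ?thesis using that[of "Inl ` a"] unfolding N0_def A_def by blast
        next
          case False
          hence "v \<in> U" using v U_def by blast
          thus ?thesis using that[of "{Inl v, Inr (v, 0)}"] unfolding N0_def B_def by blast
        qed
        have "f \<in> N'" using f s by blast
        have djN': "\<forall>e1\<in>N'. \<forall>e2\<in>N'. e1 \<noteq> e2 \<longrightarrow> e1 \<inter> e2 = {}"
          using m' unfolding matching_def by blast
        have "e \<inter> f \<noteq> {}" using f v by blast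
        hence "e = f" using djN' eN \<open>f \<in> N'\<close> by blast
        thus "e \<in> N0" using f by blast
      qed
    qed (rule s)
  qed
  thus ?thesis using cN0 by blast
qed

theorem theorem2p2:
  fixes V :: "'a set" and E :: "'a set set" and m :: nat and M :: "'a set set"
  assumes "simple_graph V E"
    and "m \<ge> 1"
    and "maximum_matching E M"
  shows "saturation_number (corona_edges V E (empty_verts m) (empty_edges m))
           = card M + (card V - 2 * card M)
       \<and> matching_number E = card M
       \<and> ((\<exists>P. perfect_matching V E P) \<longrightarrow>
            real (saturation_number (corona_edges V E (empty_verts m) (empty_edges m)))
              = real (card V) / 2)"
proof -
  let ?CE = "corona_edges V E (empty_verts m) (empty_edges m)"
  have mt: "matching E M" using assms(3) by (simp add: maximum_matching_def)
  have le: "2 * card M \<le> card V" using matching_le[OF assms(1) mt] .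
  obtain N0 where N0: "maximal_matching ?CE N0" "card N0 = card M + (card V - 2 * card M)"
    using upper[OF assms] by blast
  have finS: "finite {N. maximal_matching ?CE N}"
  proof (rule finite_subset)
    show "{N. maximal_matching ?CE N} \<subseteq> Pow ?CE"
    proof
      fix N assume "N \<in> {N. maximal_matching ?CE N}"
      hence "matching ?CE N" by (simp add: maximal_matching_def)
      thus "N \<in> Pow ?CE" by (simp add: matching_def)
    qed
    show "finite (Pow ?CE)" using CE_fin[OF assms(1)] by simp
  qed
  have sat: "saturation_number ?CE = card M + (card V - 2 * card M)"
    unfolding saturation_number_def
  proof (rule Min_eqI)
    show "finite (card ` {N. maximal_matching ?CE N})" using finS by simp
    show "card M + (card V - 2 * card M) \<in> card ` {N. maximal_matching ?CE N}"
      using N0 by (intro image_eqI[of _ _ N0]) simp_all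
    fix y assume "y \<in> card ` {N. maximal_matching ?CE N}"
    then obtain N where "maximal_matching ?CE N" "y = card N" by blast
    hence "card V - card M \<le> y" using lower[OF assms(1,2) _ assms(3)] by simp
    thus "card M + (card V - 2 * card M) \<le> y" using le by linarith
  qed
  have finM: "finite {M'. matching E M'}"
  proof (rule finite_subset)
    show "{M'. matching E M'} \<subseteq> Pow E" unfolding matching_def by blast
    show "finite (Pow E)" using sg_finE[OF assms(1)] by simp
  qed
  have mn: "matching_number E = card M"
    unfolding matching_number_def
  proof (rule Max_eqI)
    show "finite (card ` {M'. matching E M'})" using finM by simp
    show "card M \<in> card ` {M'. matching E M'}" using mt by blast
    fix y assume "y \<in> card ` {M'. matching E M'}"
    thus "y \<le> card M" using assms(3) unfolding maximum_matching_def by blast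
  qed
  have pm: "real (saturation_number ?CE) = real (card V) / 2" if pmex: "\<exists>P. perfect_matching V E P"
  proof -
    obtain P where P: "matching E P" "\<Union>P = V" using pmex by (auto simp: perfect_matching_def)
    have "card V = 2 * card P" using matching_card(2)[OF assms(1) P(1)] P(2) by simp
    moreover have "card P \<le> card M" using assms(3) P(1) by (simp add: maximum_matching_def)
    ultimately have "card V = 2 * card M" using le by linarith
    thus ?thesis using sat by simp
  qed
  show ?thesis using sat mn pm by blast
qed

end
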